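(* Suppose $G$ acts transitively on $S$. Then for every $\sigma$-finite jointly invariant measure $M$ on $S\times S$ and every $B\in\mathcal S$, $$\int\tilde\Delta(s,t)\mathbf 1_B(s)\,M(d(s,t))=\int\mathbf 1_B(t)\,M(d(s,t)),$$ where $\tilde\Delta(s,t)=\Delta(g^{-1})$ for any $g\in G$ with $gs=t$.
   Context: $G$ is a locally compact second countable Hausdorff group with left Haar measure $\lambda$ and modular function $\Delta$ ($\int f(gh)\lambda(dg)=\Delta(h^{-1})\int f\,d\lambda$). $(S,\mathcal S)$ is a Borel space on which $G$ acts measurably and properly (with $\mu_s$ the image of $\lambda$ under $g\mapsto gs$, there is a measurable partition $B_1,B_2,\dots$ of $S$ with $\mu_s(B_n)<\infty$ for all $s,n$); under properness $\Delta(g^{-1})$ does not depend on the choice of $g$ with $gs=t$. Transitive means $Gs=S$ for some (all) $s$. $M$ jointly invariant means $M(\{(gs,gt):(s,t)\in A\})=M(A)$ for all $g$ and measurable $A$. *)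

theory Defs
  imports "HOL-Analysis.Analysis"
begin

text \<open>The group G is the type 'g, written additively (group_add is
  not assumed commutative): g + h is the product gh, -g the inverse g^{-1},
  0 the identity.\<close>

text \<open>Borel space in the sense of Kallenberg: Borel isomorphic to a Borel subset of the reals.\<close>
definition borel_space_meas :: "'s measure \<Rightarrow> bool" where
  "borel_space_meas S \<longleftrightarrow> (\<exists>(f :: 's \<Rightarrow> real) h A. A \<in> sets borel \<and>
      f \<in> measurable S (restrict_space borel A) \<and>
      h \<in> measurable (restrict_space borel A) S \<and>
      (\<forall>x\<in>space S. h (f x) = x) \<and> (\<forall>y\<in>A. f (h y) = y))"

definition left_haar :: "'g::topological_group_add measure \<Rightarrow> bool" where
  "left_haar lam \<longleftrightarrow> sets lam = sets borel \<and>
     (\<forall>g A. A \<in> sets borel \<longrightarrow> emeasure lam ((+) g ` A) = emeasure lam A) \<and>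
     (\<forall>K. compact K \<longrightarrow> emeasure lam K < \<infinity>) \<and>
     (\<forall>U. open U \<and> U \<noteq> {} \<longrightarrow> emeasure lam U > 0)"

definition modular_function :: "'g::topological_group_add measure \<Rightarrow> ('g \<Rightarrow> real) \<Rightarrow> bool" where
  "modular_function lam Delta \<longleftrightarrow> (\<forall>h. Delta h > 0) \<and>
     (\<forall>h (f :: 'g \<Rightarrow> ennreal). f \<in> borel_measurable borel \<longrightarrow>
        (\<integral>\<^sup>+ g. f (g + h) \<partial>lam) = ennreal (Delta (- h)) * (\<integral>\<^sup>+ g. f g \<partial>lam))"

definition measurable_action :: "('g::topological_group_add \<Rightarrow> 's \<Rightarrow> 's) \<Rightarrow> 's measure \<Rightarrow> bool" where
  "measurable_action act S \<longleftrightarrow>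
     (\<lambda>(g, s). act g s) \<in> measurable (borel \<Otimes>\<^sub>M S) S \<and>
     (\<forall>s\<in>space S. act 0 s = s) \<and>
     (\<forall>g h. \<forall>s\<in>space S. act (g + h) s = act g (act h s))"

definition orbit_measure :: "'g measure \<Rightarrow> ('g \<Rightarrow> 's \<Rightarrow> 's) \<Rightarrow> 's measure \<Rightarrow> 's \<Rightarrow> 's measure" where
  "orbit_measure lam act S s = distr lam S (\<lambda>g. act g s)"

definition proper_action :: "'g measure \<Rightarrow> ('g \<Rightarrow> 's \<Rightarrow> 's) \<Rightarrow> 's measure \<Rightarrow> bool" where
  "proper_action lam act S \<longleftrightarrow> (\<exists>B :: nat \<Rightarrow> 's set.
      (\<forall>n. B n \<in> sets S) \<and> disjoint_family B \<and> (\<Union>n. B n) = space S \<and>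
      (\<forall>s\<in>space S. \<forall>n. emeasure (orbit_measure lam act S s) (B n) < \<infinity>))"

definition transitive_action :: "('g \<Rightarrow> 's \<Rightarrow> 's) \<Rightarrow> 's measure \<Rightarrow> bool" where
  "transitive_action act S \<longleftrightarrow> (\<exists>s\<in>space S. \<forall>t\<in>space S. \<exists>g. act g s = t)"

definition jointly_invariant :: "('g \<Rightarrow> 's \<Rightarrow> 's) \<Rightarrow> 's measure \<Rightarrow> ('s \<times> 's) measure \<Rightarrow> bool" where
  "jointly_invariant act S M \<longleftrightarrow> (\<forall>g. \<forall>A\<in>sets (S \<Otimes>\<^sub>M S).
      emeasure M ((\<lambda>(s, t). (act g s, act g t)) ` A) = emeasure M A)"

definition Delta_tilde :: "('g::group_add \<Rightarrow> real) \<Rightarrow> ('g \<Rightarrow> 's \<Rightarrow> 's) \<Rightarrow> 's \<Rightarrow> 's \<Rightarrow> real" where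
  "Delta_tilde Delta act s t = Delta (- (SOME g. act g s = t))"

end

theory Submission
  imports Defs
begin


lemma act_comp:
  assumes "(\<lambda>(g,s). act g s) \<in> measurable (borel \<Otimes>\<^sub>M S) S"
    "f \<in> measurable N borel" "h \<in> measurable N S"
  shows "(\<lambda>x. act (f x) (h x)) \<in> measurable N S"
  using measurable_compose[OF measurable_Pair[OF assms(2,3)] assms(1)] by simp

lemma uminus_meas_g:
  fixes f :: "'a \<Rightarrow> 'g::{topological_group_add, second_countable_topology}"
  assumes "f \<in> borel_measurable N"
  shows "(\<lambda>x. - f x) \<in> borel_measurable N"
proof -
  have "(uminus :: 'g \<Rightarrow> 'g) \<in> borel_measurable borel"
    by (rule borel_measurable_continuous_onI) (intro continuous_intros)
  from measurable_compose[OF assms this] show ?thesis by (simp add: o_def)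
qed

lemma lam_shift:
  fixes lam :: "'g::{topological_group_add, second_countable_topology} measure"
  assumes "left_haar lam" "f \<in> borel_measurable borel"
  shows "(\<integral>\<^sup>+ g. f (k + g) \<partial>lam) = (\<integral>\<^sup>+ g. f g \<partial>lam)"
proof -
  have ls: "sets lam = sets borel" and inv: "\<And>g A. A \<in> sets borel \<Longrightarrow> emeasure lam ((+) g ` A) = emeasure lam A"
    using assms(1) unfolding left_haar_def by auto
  have sp: "space lam = UNIV" using sets_eq_imp_space_eq[OF ls] by simp
  have T: "((+) k) \<in> measurable lam borel"
    unfolding measurable_cong_sets[OF ls refl]
    by (rule borel_measurable_continuous_onI) (intro continuous_intros)
  have D: "distr lam borel ((+) k) = lam"
  proof (rule measure_eqI)
    show "sets (distr lam borel ((+) k)) = sets lam" using ls by simp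
    fix A assume "A \<in> sets (distr lam borel ((+) k))"
    then have A: "A \<in> sets borel" by simp
    have "(+) k -` A \<inter> space lam = (+) (-k) ` A"
      by (auto simp: sp image_iff) (metis add_minus_cancel)
    then show "emeasure (distr lam borel ((+) k)) A = emeasure lam A"
      using emeasure_distr[OF T A] inv[OF A] by simp
  qed
  have "(\<integral>\<^sup>+ g. f g \<partial>lam) = (\<integral>\<^sup>+ g. f g \<partial>distr lam borel ((+) k))" using D by simp
  also have "\<dots> = (\<integral>\<^sup>+ g. f (k + g) \<partial>lam)"
    by (rule nn_integral_distr[OF T]) (simp add: assms(2))
  finally show ?thesis ..
qed

lemma M_shift:
  assumes act: "measurable_action act S" and JI: "jointly_invariant act S M"
    and Ms: "sets M = sets (S \<Otimes>\<^sub>M S)"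
    and F: "F \<in> borel_measurable (S \<Otimes>\<^sub>M S)"
  shows "(\<integral>\<^sup>+ x. F (act g (fst x), act g (snd x)) \<partial>M) = (\<integral>\<^sup>+ x. F x \<partial>M)"
proof -
  have am: "(\<lambda>(g,s). act g s) \<in> measurable (borel \<Otimes>\<^sub>M S) S"
    and a0: "\<And>s. s \<in> space S \<Longrightarrow> act 0 s = s"
    and aa: "\<And>g h s. s \<in> space S \<Longrightarrow> act (g + h) s = act g (act h s)"
    using act unfolding measurable_action_def by auto
  note am'[measurable (raw)] = act_comp[OF am]
  have sp: "space M = space S \<times> space S"
    using sets_eq_imp_space_eq[OF Ms] by (simp add: space_pair_measure)
  have inv: "\<And>h s. s \<in> space S \<Longrightarrow> act h (act (-h) s) = s"
    by (metis a0 aa add.right_inverse)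
  have cl: "\<And>h s. s \<in> space S \<Longrightarrow> act h s \<in> space S"
    using measurable_space[OF am] by (auto simp: space_pair_measure)
  define T where "T = (\<lambda>x. (act g (fst x), act g (snd x)))"
  have Tm: "T \<in> measurable M M"
    unfolding T_def measurable_cong_sets[OF Ms Ms] by measurable
  have D: "distr M M T = M"
  proof (rule measure_eqI)
    show "sets (distr M M T) = sets M" by simp
    fix A assume "A \<in> sets (distr M M T)"
    then have A: "A \<in> sets M" by simp
    then have As: "A \<subseteq> space S \<times> space S" using sets.sets_into_space sp by blast
    have "T -` A \<inter> space M = (\<lambda>(s, t). (act (-g) s, act (-g) t)) ` A"
    proof (intro equalityI subsetI)
      fix x assume x: "x \<in> T -` A \<inter> space M"
      obtain a b where xab: "x = (a,b)" by (cases x)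
      have ab: "a \<in> space S" "b \<in> space S" using x xab sp by auto
      have "T x \<in> A" using x by simp
      moreover have "x = (\<lambda>(s, t). (act (-g) s, act (-g) t)) (T x)"
        using inv[OF ab(1), of "-g"] inv[OF ab(2), of "-g"] by (simp add: xab T_def)
      ultimately show "x \<in> (\<lambda>(s, t). (act (-g) s, act (-g) t)) ` A" by blast
    next
      fix x assume "x \<in> (\<lambda>(s, t). (act (-g) s, act (-g) t)) ` A"
      then obtain a b where ab: "(a,b) \<in> A" and xab: "x = (act (-g) a, act (-g) b)" by auto
      then have s: "a \<in> space S" "b \<in> space S" using As by auto
      have "T x = (a,b)" using inv[OF s(1), of g] inv[OF s(2), of g] by (simp add: xab T_def)
      moreover have "x \<in> space M" using s cl sp xab by simp
      ultimately show "x \<in> T -` A \<inter> space M" using ab by simp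
    qed
    then show "emeasure (distr M M T) A = emeasure M A"
      using emeasure_distr[OF Tm A] JI A Ms unfolding jointly_invariant_def by simp
  qed
  have "(\<integral>\<^sup>+ x. F x \<partial>M) = (\<integral>\<^sup>+ x. F x \<partial>distr M M T)" using D by simp
  also have "\<dots> = (\<integral>\<^sup>+ x. F (T x) \<partial>M)"
    by (rule nn_integral_distr[OF Tm]) (simp add: measurable_cong_sets[OF Ms refl] F)
  finally show ?thesis by (simp add: T_def)
qed


lemma ennr_alg1:
  fixes D p q :: real and i :: ennreal
  assumes "D > 0" "p > 0" "q > 0"
  shows "ennreal (D*q) / ennreal (D*p) * i / ennreal (D*p) = ennreal (q/p) * (i / ennreal (D*p))"
proof -
  have "ennreal (D*q) / ennreal (D*p) = ennreal (q/p)"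
    using assms by (simp add: divide_ennreal)
  then show ?thesis by (simp add: divide_ennreal_def mult.assoc)
qed

lemma ennr_alg2:
  fixes D p q :: real and i :: ennreal
  assumes "D > 0" "p > 0" "q > 0"
  shows "i / ennreal (D*p) = ennreal (q/p) * (i / ennreal (D*q))"
proof -
  have "ennreal (q/p) * inverse (ennreal (D*q)) = inverse (ennreal (D*p))"
    using assms by (simp add: inverse_ennreal ennreal_mult[symmetric] field_simps)
  then show ?thesis by (simp add: divide_ennreal_def mult.commute mult.left_commute)
qed



theorem corollary6p2:
  fixes lam :: "'g::{topological_group_add, second_countable_topology, t2_space} measure"
    and Delta :: "'g \<Rightarrow> real"
    and S :: "'s measure"
    and act :: "'g \<Rightarrow> 's \<Rightarrow> 's"
    and M :: "('s \<times> 's) measure"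
    and B :: "'s set"
  assumes "locally_compact_space (euclidean :: 'g topology)"
    and "left_haar lam"
    and "modular_function lam Delta"
    and "borel_space_meas S"
    and "measurable_action act S"
    and "proper_action lam act S"
    and "transitive_action act S"
    and "sets M = sets (S \<Otimes>\<^sub>M S)"
    and "sigma_finite_measure M"
    and "jointly_invariant act S M"
    and "B \<in> sets S"
  shows "(\<integral>\<^sup>+ st. ennreal (Delta_tilde Delta act (fst st) (snd st)) * indicator B (fst st) \<partial>M)
       = (\<integral>\<^sup>+ st. indicator B (snd st) \<partial>M)"
proof -
  have ls: "sets lam = sets borel" and lpos: "\<And>U. open U \<Longrightarrow> U \<noteq> {} \<Longrightarrow> emeasure lam U > 0"
    using assms(2) unfolding left_haar_def by auto
  have lsp: "space lam = UNIV" using sets_eq_imp_space_eq[OF ls] by simp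
  have Dpos: "\<And>h. Delta h > 0"
    and Dmod: "\<And>h f. f \<in> borel_measurable borel \<Longrightarrow>
        (\<integral>\<^sup>+ g. f (g + h) \<partial>lam) = ennreal (Delta (- h)) * (\<integral>\<^sup>+ g. f g \<partial>lam)"
    using assms(3) unfolding modular_function_def by auto
  have am: "(\<lambda>(g,s). act g s) \<in> measurable (borel \<Otimes>\<^sub>M S) S"
    and a0: "\<And>s. s \<in> space S \<Longrightarrow> act 0 s = s"
    and aa: "\<And>g h s. s \<in> space S \<Longrightarrow> act (g + h) s = act g (act h s)"
    using assms(5) unfolding measurable_action_def by auto
  note am'[measurable (raw)] = act_comp[OF am]
  note um[measurable (raw)] = uminus_meas_g[where 'g='g]
  have cl: "\<And>h s. s \<in> space S \<Longrightarrow> act h s \<in> space S"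
    using measurable_space[OF am] by (auto simp: space_pair_measure)
  have Ms: "sets M = sets (S \<Otimes>\<^sub>M S)" by (rule assms(8))
  have Msp: "space M = space S \<times> space S"
    using sets_eq_imp_space_eq[OF Ms] by (simp add: space_pair_measure)
  have mlam: "\<And>N. measurable lam N = measurable borel N" by (rule measurable_cong_sets[OF ls refl])
  have mM: "\<And>N. measurable M N = measurable (S \<Otimes>\<^sub>M S) N" by (rule measurable_cong_sets[OF Ms refl])
  have mLM: "\<And>N. measurable (lam \<Otimes>\<^sub>M M) N = measurable (borel \<Otimes>\<^sub>M (S \<Otimes>\<^sub>M S)) N"
    by (rule measurable_cong_sets[OF sets_pair_measure_cong[OF ls Ms] refl])
  obtain s0 where s0: "s0 \<in> space S" and tr: "\<And>t. t \<in> space S \<Longrightarrow> \<exists>g. act g s0 = t"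
    using assms(7) unfolding transitive_action_def by auto
  have trans: "\<exists>k. act k s = t" if st: "s \<in> space S" "t \<in> space S" for s t
  proof -
    obtain a b where a: "act a s0 = s" and b: "act b s0 = t" using tr[OF st(1)] tr[OF st(2)] by blast
    have sS: "s \<in> space S" by (rule st(1))
    have "act (b + - a) s = act b (act (-a) s)" by (rule aa[OF sS])
    also have "act (-a) s = act (-a) (act a s0)" using a by simp
    also have "\<dots> = act (-a + a) s0" by (rule aa[OF s0, symmetric])
    also have "\<dots> = s0" using a0[OF s0] by simp
    finally have "act (b + - a) s = t" using b by simp
    then show ?thesis by blast
  qed
  from assms(6)[unfolded proper_action_def] obtain Bn :: "nat \<Rightarrow> 's set" where
    BB: "(\<forall>n. Bn n \<in> sets S) \<and> disjoint_family Bn \<and> (\<Union>n. Bn n) = space S \<and>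
      (\<forall>s\<in>space S. \<forall>n. emeasure (orbit_measure lam act S s) (Bn n) < \<infinity>)"
    by (elim exE) metis
  have Bn: "\<And>n. Bn n \<in> sets S" "(\<Union>n. Bn n) = space S" using BB by simp_all
  have Bfin: "\<And>s n. s \<in> space S \<Longrightarrow> emeasure (orbit_measure lam act S s) (Bn n) < \<infinity>"
    using BB by simp
  define An where "An n = (\<lambda>g. act g s0) -` Bn n" for n
  have os0: "(\<lambda>g. act g s0) \<in> measurable lam S" unfolding mlam using s0 by measurable
  have An_sets: "An n \<in> sets lam" for n
    using measurable_sets[OF os0 Bn(1)[of n]] by (simp add: An_def lsp)
  have An_meas: "emeasure lam (An n) = emeasure (orbit_measure lam act S s0) (Bn n)" for n
    unfolding orbit_measure_def using emeasure_distr[OF os0 Bn(1)[of n]] by (simp add: An_def lsp)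
  have An_fin: "emeasure lam (An n) < \<infinity>" for n using An_meas Bfin[OF s0] by simp
  have An_cov: "(\<Union>n. An n) = UNIV"
  proof -
    have "act g s0 \<in> (\<Union>n. Bn n)" for g using Bn(2) cl[OF s0] by simp
    then show ?thesis by (auto simp: An_def)
  qed
  interpret lamsf: sigma_finite_measure lam
  proof
    show "\<exists>A. countable A \<and> A \<subseteq> sets lam \<and> \<Union> A = space lam \<and> (\<forall>a\<in>A. emeasure lam a \<noteq> \<infinity>)"
      using An_sets An_fin An_cov lsp by (intro exI[of _ "range An"]) (auto simp: less_top)
  qed
  interpret Msf: sigma_finite_measure M by (rule assms(9))
  interpret LM: pair_sigma_finite lam M ..
  have "\<exists>n. emeasure lam (An n) > 0"
  proof (rule ccontr)
    assume "\<not> (\<exists>n. emeasure lam (An n) > 0)"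
    then have z: "\<And>n. emeasure lam (An n) = 0" by (simp add: not_gr_zero)
    have "range An \<subseteq> sets lam" using An_sets by auto
    from emeasure_UN_eq_0[OF z this] have "emeasure lam (\<Union>n. An n) = 0" .
    with lpos[of UNIV] An_cov show False by simp
  qed
  then obtain n0 where n0: "emeasure lam (An n0) > 0" by blast
  define c where "c s = (\<integral>\<^sup>+ g. indicator (Bn n0) (act g s) \<partial>lam)" for s
  have Bn0[measurable]: "Bn n0 \<in> sets S" by (rule Bn(1))
  have c_meas[measurable]: "c \<in> borel_measurable S"
  proof -
    have "case_prod (\<lambda>s g. indicator (Bn n0) (act g s) :: ennreal) \<in> borel_measurable (S \<Otimes>\<^sub>M lam)"
      unfolding measurable_cong_sets[OF sets_pair_measure_cong[OF refl ls] refl] by measurable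
    from lamsf.borel_measurable_nn_integral[OF this] show ?thesis unfolding c_def[abs_def] by simp
  qed
  have c_shift: "c (act x s) = ennreal (Delta (-x)) * c s" if s: "s \<in> space S" for x s
  proof -
    have "(\<lambda>g. indicator (Bn n0) (act g s) :: ennreal) \<in> borel_measurable borel" using s by measurable
    from Dmod[OF this, of x] show ?thesis using aa[OF s] by (simp add: c_def)
  qed
  have c0: "c s0 = emeasure lam (An n0)"
    unfolding c_def by (subst nn_integral_indicator[OF An_sets, symmetric]) (auto simp: An_def indicator_def intro!: nn_integral_cong)
  define cr where "cr s = enn2real (c s)" for s
  have cr: "c s = ennreal (cr s) \<and> cr s > 0" if s: "s \<in> space S" for s
  proof -
    obtain a where a: "act a s0 = s" using tr[OF s] by blast
    have "c s = ennreal (Delta (-a)) * emeasure lam (An n0)" using c_shift[OF s0, of a] a c0 by simp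
    moreover have "emeasure lam (An n0) = ennreal (enn2real (emeasure lam (An n0)))"
      using An_fin[of n0] by (simp add: ennreal_enn2real_if)
    moreover have "enn2real (emeasure lam (An n0)) > 0"
      using An_fin[of n0] n0 by (simp add: enn2real_positive_iff)
    ultimately show ?thesis using Dpos[of "-a"] by (simp add: cr_def ennreal_mult'' enn2real_mult)
  qed
  have Dt: "ennreal (Delta_tilde Delta act s t) = c t / c s" if s: "s \<in> space S" and t: "t \<in> space S" for s t
  proof -
    define k where "k = (SOME g. act g s = t)"
    have k: "act k s = t" unfolding k_def using trans[OF s t] by (rule someI_ex)
    have "c t = ennreal (Delta (-k)) * c s" using c_shift[OF s, of k] k by simp
    then show ?thesis using cr[OF s] unfolding Delta_tilde_def k_def[symmetric]
      by (simp add: mult_divide_eq_ennreal)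
  qed
  have cne: "c s \<noteq> 0" "c s < top" if "s \<in> space S" for s using cr[OF that] by auto
  have inv: "act g (act (-g) s) = s" if "s \<in> space S" for g s
    using aa[OF that, of g "-g"] a0[OF that] by simp
  have key: "(\<integral>\<^sup>+x. F x \<partial>M) = (\<integral>\<^sup>+x. (\<integral>\<^sup>+g. F (act (-g) (fst x), act (-g) (snd x)) / c (act (-g) (fst x)) \<partial>lam) * indicator (Bn n0) (fst x) \<partial>M)"
    if F[measurable]: "F \<in> borel_measurable (S \<Otimes>\<^sub>M S)" for F
  proof -
    have "(\<integral>\<^sup>+x. F x \<partial>M) = (\<integral>\<^sup>+x. F x / c (fst x) * c (fst x) \<partial>M)"
      by (rule nn_integral_cong) (auto simp: Msp ennreal_divide_times cne)
    also have "\<dots> = (\<integral>\<^sup>+x. \<integral>\<^sup>+g. F x / c (fst x) * indicator (Bn n0) (act g (fst x)) \<partial>lam \<partial>M)"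
    proof (rule nn_integral_cong)
      fix x assume x: "x \<in> space M"
      have fx[measurable]: "fst x \<in> space S" "snd x \<in> space S" using x Msp by (auto simp: mem_Times_iff)
      have "(\<lambda>g. indicator (Bn n0) (act g (fst x)) :: ennreal) \<in> borel_measurable lam"
        unfolding mlam by measurable
      then show "F x / c (fst x) * c (fst x) = (\<integral>\<^sup>+g. F x / c (fst x) * indicator (Bn n0) (act g (fst x)) \<partial>lam)"
        by (simp add: nn_integral_cmult c_def)
    qed
    also have "\<dots> = (\<integral>\<^sup>+g. \<integral>\<^sup>+x. F x / c (fst x) * indicator (Bn n0) (act g (fst x)) \<partial>M \<partial>lam)"
      by (rule LM.Fubini') (unfold mLM, measurable)
    also have "\<dots> = (\<integral>\<^sup>+g. \<integral>\<^sup>+x. F (act (-g) (fst x), act (-g) (snd x)) / c (act (-g) (fst x)) * indicator (Bn n0) (fst x) \<partial>M \<partial>lam)"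
    proof (rule nn_integral_cong)
      fix g
      have "(\<integral>\<^sup>+x. F x / c (fst x) * indicator (Bn n0) (act g (fst x)) \<partial>M) =
          (\<integral>\<^sup>+x. (\<lambda>y. F y / c (fst y) * indicator (Bn n0) (act g (fst y))) (act (-g) (fst x), act (-g) (snd x)) \<partial>M)"
        by (rule M_shift[OF assms(5) assms(10) Ms, symmetric]) measurable
      also have "\<dots> = (\<integral>\<^sup>+x. F (act (-g) (fst x), act (-g) (snd x)) / c (act (-g) (fst x)) * indicator (Bn n0) (fst x) \<partial>M)"
        by (rule nn_integral_cong) (auto simp: Msp inv)
      finally show "(\<integral>\<^sup>+x. F x / c (fst x) * indicator (Bn n0) (act g (fst x)) \<partial>M) =
          (\<integral>\<^sup>+x. F (act (-g) (fst x), act (-g) (snd x)) / c (act (-g) (fst x)) * indicator (Bn n0) (fst x) \<partial>M)" .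
    qed
    also have "\<dots> = (\<integral>\<^sup>+x. \<integral>\<^sup>+g. F (act (-g) (fst x), act (-g) (snd x)) / c (act (-g) (fst x)) * indicator (Bn n0) (fst x) \<partial>lam \<partial>M)"
      by (rule LM.Fubini'[symmetric]) (unfold mLM, measurable)
    also have "\<dots> = (\<integral>\<^sup>+x. (\<integral>\<^sup>+g. F (act (-g) (fst x), act (-g) (snd x)) / c (act (-g) (fst x)) \<partial>lam) * indicator (Bn n0) (fst x) \<partial>M)"
    proof (rule nn_integral_cong)
      fix x assume x: "x \<in> space M"
      have fx[measurable]: "fst x \<in> space S" "snd x \<in> space S" using x Msp by (auto simp: mem_Times_iff)
      have "(\<lambda>g. F (act (-g) (fst x), act (-g) (snd x)) / c (act (-g) (fst x))) \<in> borel_measurable lam"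
        unfolding mlam by measurable
      then show "(\<integral>\<^sup>+g. F (act (-g) (fst x), act (-g) (snd x)) / c (act (-g) (fst x)) * indicator (Bn n0) (fst x) \<partial>lam) =
          (\<integral>\<^sup>+g. F (act (-g) (fst x), act (-g) (snd x)) / c (act (-g) (fst x)) \<partial>lam) * indicator (Bn n0) (fst x)"
        by (rule nn_integral_multc)
    qed
    finally show ?thesis .
  qed
  define h where "h y = (indicator B y :: ennreal) / c y" for y
  have Bm[measurable]: "B \<in> sets S" by (rule assms(11))
  have h_meas[measurable]: "h \<in> borel_measurable S" unfolding h_def[abs_def] by measurable
  define psi where "psi s = (\<integral>\<^sup>+g. h (act (-g) s) \<partial>lam)" for s
  have psi_eq: "psi t = psi s" if s: "s \<in> space S" and t: "t \<in> space S" for s t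
  proof -
    obtain k where k: "act k s = t" using trans[OF s t] by blast
    define f where "f g = h (act (-g + k) s)" for g
    have fm: "f \<in> borel_measurable borel" unfolding f_def[abs_def] using s by measurable
    have "psi t = (\<integral>\<^sup>+g. f g \<partial>lam)"
      unfolding psi_def f_def using aa[OF s] k by simp
    also have "\<dots> = (\<integral>\<^sup>+g. f (k + g) \<partial>lam)" by (rule lam_shift[OF assms(2) fm, symmetric])
    also have "\<dots> = psi s"
      unfolding psi_def f_def by (simp add: minus_add add.assoc)
    finally show ?thesis .
  qed
  have cact: "c (act (-g) s) = ennreal (Delta g * cr s)" if s: "s \<in> space S" for g s
    using c_shift[OF s, of "-g"] cr[OF s] Dpos[of g] by (simp add: ennreal_mult)
  have "(\<integral>\<^sup>+ st. ennreal (Delta_tilde Delta act (fst st) (snd st)) * indicator B (fst st) \<partial>M)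
      = (\<integral>\<^sup>+ x. c (snd x) / c (fst x) * indicator B (fst x) \<partial>M)"
    by (rule nn_integral_cong) (auto simp: Msp Dt mem_Times_iff)
  also have "\<dots> = (\<integral>\<^sup>+x. (\<integral>\<^sup>+g. c (act (-g) (snd x)) / c (act (-g) (fst x)) * indicator B (act (-g) (fst x)) / c (act (-g) (fst x)) \<partial>lam) * indicator (Bn n0) (fst x) \<partial>M)"
  proof -
    have Fm: "(\<lambda>x. c (snd x) / c (fst x) * indicator B (fst x)) \<in> borel_measurable (S \<Otimes>\<^sub>M S)" by measurable
    show ?thesis using key[OF Fm] by simp
  qed
  also have "\<dots> = (\<integral>\<^sup>+x. (\<integral>\<^sup>+g. indicator B (act (-g) (snd x)) / c (act (-g) (fst x)) \<partial>lam) * indicator (Bn n0) (fst x) \<partial>M)"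
  proof (rule nn_integral_cong)
    fix x assume x: "x \<in> space M"
    have fx[measurable]: "fst x \<in> space S" "snd x \<in> space S" using x Msp by (auto simp: mem_Times_iff)
    define s t where "s = fst x" and "t = snd x"
    have st[measurable]: "s \<in> space S" "t \<in> space S" using fx by (auto simp: s_def t_def)
    have "(\<integral>\<^sup>+g. c (act (-g) t) / c (act (-g) s) * indicator B (act (-g) s) / c (act (-g) s) \<partial>lam)
        = (\<integral>\<^sup>+g. ennreal (cr t / cr s) * h (act (-g) s) \<partial>lam)"
      by (rule nn_integral_cong) (simp add: cact st h_def ennr_alg1 Dpos cr)
    also have "\<dots> = ennreal (cr t / cr s) * psi s"
      unfolding psi_def by (rule nn_integral_cmult) (unfold mlam, measurable)
    also have "\<dots> = ennreal (cr t / cr s) * psi t" using psi_eq[OF st] by simp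
    also have "\<dots> = (\<integral>\<^sup>+g. ennreal (cr t / cr s) * h (act (-g) t) \<partial>lam)"
      unfolding psi_def by (rule nn_integral_cmult[symmetric]) (unfold mlam, measurable)
    also have "\<dots> = (\<integral>\<^sup>+g. indicator B (act (-g) t) / c (act (-g) s) \<partial>lam)"
      by (rule nn_integral_cong) (simp add: cact st h_def ennr_alg2[symmetric] Dpos cr)
    finally show "(\<integral>\<^sup>+g. c (act (-g) (snd x)) / c (act (-g) (fst x)) * indicator B (act (-g) (fst x)) / c (act (-g) (fst x)) \<partial>lam) * indicator (Bn n0) (fst x)
       = (\<integral>\<^sup>+g. indicator B (act (-g) (snd x)) / c (act (-g) (fst x)) \<partial>lam) * indicator (Bn n0) (fst x)"
      by (simp add: s_def t_def)
  qed
  also have "\<dots> = (\<integral>\<^sup>+ st. indicator B (snd st) \<partial>M)"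
  proof -
    have Fm: "(\<lambda>x. indicator B (snd x) :: ennreal) \<in> borel_measurable (S \<Otimes>\<^sub>M S)" by measurable
    show ?thesis using key[OF Fm] by simp
  qed
  finally show ?thesis .
qed

end
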